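(* Let $f, g$ be real-valued functions on a Cartesian product $X = \prod_{i\in I} X_i$ whose difference sets $\Delta(f)$ and $\Delta(g)$ are finite. Then there exists $\alpha_0 \in (0, \infty]$, depending on $f$ and $g$, such that $f + \alpha g$ refines $f$ for every real $\alpha$ with $|\alpha| < \alpha_0$.
   Context: Two elements of $X$ are adjacent if they differ in exactly one coordinate. For $f, f'\colon X \to \mathbb{R}$, $f'$ refines $f$ if for all $\vec{x},\vec{x}' \in X$ having all but one coordinate the same, $f(\vec{x}) < f(\vec{x}')$ implies $f'(\vec{x}) < f'(\vec{x}')$. The difference set of $f$ is $\Delta(f) = \{f(\vec{x}') - f(\vec{x}) : \vec{x}, \vec{x}' \text{ adjacent}\}$. *)

theory Defs
  imports Main "HOL-Library.Extended_Real" "HOL-Library.FuncSet"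
begin

text \<open>The Cartesian product X = Pi_{i in I} X_i is modelled as PiE I Xs
 (extensional functions). Two elements are adjacent if they differ in exactly one coordinate.\<close>

definition adjacent :: "'i set \<Rightarrow> ('i \<Rightarrow> 'a) \<Rightarrow> ('i \<Rightarrow> 'a) \<Rightarrow> bool" where
  "adjacent I x x' \<longleftrightarrow> (\<exists>i. {j \<in> I. x j \<noteq> x' j} = {i})"

definition all_but_one_same :: "'i set \<Rightarrow> ('i \<Rightarrow> 'a) \<Rightarrow> ('i \<Rightarrow> 'a) \<Rightarrow> bool" where
  "all_but_one_same I x x' \<longleftrightarrow> (\<exists>i\<in>I. \<forall>j\<in>I - {i}. x j = x' j)"

definition refines :: "'i set \<Rightarrow> ('i \<Rightarrow> 'a set) \<Rightarrow> (('i \<Rightarrow> 'a) \<Rightarrow> real) \<Rightarrow> (('i \<Rightarrow> 'a) \<Rightarrow> real) \<Rightarrow> bool" where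
  "refines I Xs f' f \<longleftrightarrow>
     (\<forall>x\<in>PiE I Xs. \<forall>x'\<in>PiE I Xs. all_but_one_same I x x' \<longrightarrow> f x < f x' \<longrightarrow> f' x < f' x')"

definition diff_set :: "'i set \<Rightarrow> ('i \<Rightarrow> 'a set) \<Rightarrow> (('i \<Rightarrow> 'a) \<Rightarrow> real) \<Rightarrow> real set" where
  "diff_set I Xs f = {f x' - f x | x x'. x \<in> PiE I Xs \<and> x' \<in> PiE I Xs \<and> adjacent I x x'}"

end

theory Submission
  imports Defs
begin

lemma abos_adjacent:
  assumes "x \<in> PiE I Xs" "x' \<in> PiE I Xs" "all_but_one_same I x x'" "x \<noteq> x'"
  shows "adjacent I x x'"
proof -
  from assms(3) obtain i where i: "i \<in> I" "\<forall>j\<in>I - {i}. x j = x' j"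
    unfolding all_but_one_same_def by blast
  have "x i \<noteq> x' i"
  proof
    assume "x i = x' i"
    then have "\<forall>j\<in>I. x j = x' j" using i by blast
    then have "x = x'" using assms(1,2) by (metis PiE_ext)
    then show False using assms(4) by simp
  qed
  then have "{j \<in> I. x j \<noteq> x' j} = {i}" using i by blast
  then show ?thesis unfolding adjacent_def by blast
qed

theorem corollary2:
  fixes I :: "'i set" and Xs :: "'i \<Rightarrow> 'a set" and f g :: "('i \<Rightarrow> 'a) \<Rightarrow> real"
  assumes "finite (diff_set I Xs f)" and "finite (diff_set I Xs g)"
  shows "\<exists>\<alpha>0::ereal. 0 < \<alpha>0 \<and>
           (\<forall>\<alpha>::real. ereal \<bar>\<alpha>\<bar> < \<alpha>0 \<longrightarrow> refines I Xs (\<lambda>x. f x + \<alpha> * g x) f)"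
proof -
  define P where "P = {d \<in> diff_set I Xs f. d > 0}"
  define m where "m = Min (insert 1 P)"
  define M where "M = Max (insert 0 (abs ` diff_set I Xs g))"
  have finP: "finite P" using assms(1) unfolding P_def by simp
  have mpos: "m > 0" unfolding m_def using finP by (simp add: P_def)
  have Mnn: "M \<ge> 0" unfolding M_def using assms(2) by simp
  have mle: "m \<le> d" if "d \<in> P" for d unfolding m_def using finP that by simp
  have Mge: "\<bar>d\<bar> \<le> M" if "d \<in> diff_set I Xs g" for d
    unfolding M_def using assms(2) that by simp
  show ?thesis
  proof (intro exI conjI allI impI)
    show "0 < ereal (m / (M + 1))" using mpos Mnn by simp
    fix \<alpha> :: real
    assume "ereal \<bar>\<alpha>\<bar> < ereal (m / (M + 1))"
    then have a: "\<bar>\<alpha>\<bar> < m / (M + 1)" by simp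
    then have a2: "\<bar>\<alpha>\<bar> * (M + 1) < m" using Mnn by (simp add: pos_less_divide_eq)
    show "refines I Xs (\<lambda>x. f x + \<alpha> * g x) f"
      unfolding refines_def
    proof (intro ballI impI)
      fix x x' assume x: "x \<in> PiE I Xs" and x': "x' \<in> PiE I Xs"
        and ab: "all_but_one_same I x x'" and lt: "f x < f x'"
      then have "x \<noteq> x'" by auto
      then have adj: "adjacent I x x'" using abos_adjacent x x' ab by blast
      have "f x' - f x \<in> P" unfolding P_def diff_set_def using x x' adj lt by auto
      then have df: "m \<le> f x' - f x" by (rule mle)
      have "g x' - g x \<in> diff_set I Xs g" unfolding diff_set_def using x x' adj by auto
      then have dg: "\<bar>g x' - g x\<bar> \<le> M" by (rule Mge)
      have "\<bar>\<alpha> * (g x' - g x)\<bar> \<le> \<bar>\<alpha>\<bar> * M"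
        using dg by (simp add: abs_mult mult_left_mono)
      also have "\<dots> \<le> \<bar>\<alpha>\<bar> * (M + 1)" by (simp add: mult_left_mono)
      finally have "\<bar>\<alpha> * (g x' - g x)\<bar> < m" using a2 by linarith
      then show "f x + \<alpha> * g x < f x' + \<alpha> * g x'"
        using df by (simp add: algebra_simps abs_less_iff)
    qed
  qed
qed

end
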